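(* Let $K$ be a compact scattered space. If a space $X$ is regular and $K$-selective, then every open subspace of $X$ is $K$-selective.
   Context: All spaces are assumed $T_1$. A space is scattered if every nonempty subspace has an isolated point. For spaces $Y$, $X$, a map $\varphi:Y\to\mathcal P(X)\setminus\{\emptyset\}$ is lower semicontinuous (l.s.c.) if $\{y:\varphi(y)\cap U\neq\emptyset\}$ is open in $Y$ for every open $U\subseteq X$; a selection is a map $f:Y\to X$ with $f(y)\in\varphi(y)$ for all $y$. $X$ is $Y$-selective if every l.s.c. map from $Y$ to the nonempty closed subsets of $X$ has a continuous selection. *)

theory Defs
  imports "HOL-Analysis.Analysis"
begin

definition scattered_space :: "'a topology \<Rightarrow> bool" where
  "scattered_space Y \<longleftrightarrow>
     (\<forall>S. S \<subseteq> topspace Y \<and> S \<noteq> {} \<longrightarrow>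
        (\<exists>x\<in>S. \<exists>U. openin Y U \<and> U \<inter> S = {x}))"

definition lsc_map :: "'a topology \<Rightarrow> 'b topology \<Rightarrow> ('a \<Rightarrow> 'b set) \<Rightarrow> bool" where
  "lsc_map Y X \<phi> \<longleftrightarrow>
     (\<forall>y\<in>topspace Y. \<phi> y \<subseteq> topspace X \<and> \<phi> y \<noteq> {}) \<and>
     (\<forall>U. openin X U \<longrightarrow> openin Y {y \<in> topspace Y. \<phi> y \<inter> U \<noteq> {}})"

text \<open>X is Y-selective: every l.s.c. map from Y to the nonempty closed subsets of X
  has a continuous selection.\<close>
definition selective :: "'a topology \<Rightarrow> 'b topology \<Rightarrow> bool" where
  "selective Y X \<longleftrightarrow>
     (\<forall>\<phi>. lsc_map Y X \<phi> \<and> (\<forall>y\<in>topspace Y. closedin X (\<phi> y)) \<longrightarrow>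
        (\<exists>f. continuous_map Y X f \<and> (\<forall>y\<in>topspace Y. f y \<in> \<phi> y)))"

end

theory Submission
  imports Defs
begin

theorem mainTheorem10:
  fixes K :: "'a topology" and X :: "'b topology" and U :: "'b set"
  assumes "t1_space K" and "compact_space K" and "scattered_space K"
    and "t1_space X" and "regular_space X" and "selective K X"
    and "openin X U"
  shows "selective K (subtopology X U)"
  unfolding selective_def
proof (intro allI impI)
  fix \<phi> :: "'a \<Rightarrow> 'b set"
  assume A: "lsc_map K (subtopology X U) \<phi> \<and> (\<forall>y\<in>topspace K. closedin (subtopology X U) (\<phi> y))"
  have UX: "U \<subseteq> topspace X" using assms(7) by (simp add: openin_subset)
  have tU: "topspace (subtopology X U) = U" using UX by auto
  have ph: "\<And>y. y \<in> topspace K \<Longrightarrow> \<phi> y \<subseteq> U \<and> \<phi> y \<noteq> {}"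
    using A tU unfolding lsc_map_def by auto
  have phopen: "\<And>G. openin X G \<Longrightarrow> G \<subseteq> U \<Longrightarrow> openin K {y \<in> topspace K. \<phi> y \<inter> G \<noteq> {}}"
    using A assms(7) unfolding lsc_map_def by (simp add: openin_open_subtopology)
  define \<V> where "\<V> = {V. openin X V \<and> X closure_of V \<subseteq> U}"
  define W where "W = (\<lambda>V. {z \<in> topspace K. \<phi> z \<inter> V \<noteq> {}})"
  have Vsub: "V \<subseteq> U" if "V \<in> \<V>" for V
  proof -
    have "openin X V" "X closure_of V \<subseteq> U" using that \<V>_def by auto
    then show ?thesis by (meson closure_of_subset openin_subset order_trans)
  qed
  have cov: "topspace K \<subseteq> \<Union>(W ` \<V>)"
  proof
    fix y assume y: "y \<in> topspace K"
    then obtain x where x: "x \<in> \<phi> y" using ph by blast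
    then have xU: "x \<in> U" using ph y by auto
    have "closedin X (topspace X - U)" using assms(7) by auto
    moreover have "x \<in> topspace X - (topspace X - U)" using xU UX by auto
    ultimately obtain V where V: "openin X V" "x \<in> V" "disjnt (topspace X - U) (X closure_of V)"
      using assms(5) unfolding regular_space by blast
    have "X closure_of V \<subseteq> U" using V(3) closure_of_subset_topspace[of X V]
      by (auto simp: disjnt_iff)
    then have "V \<in> \<V>" using V \<V>_def by auto
    moreover have "y \<in> W V" using y x V W_def by auto
    ultimately show "y \<in> \<Union>(W ` \<V>)" by blast
  qed
  have "\<forall>S\<in>W ` \<V>. openin K S"
  proof
    fix S assume "S \<in> W ` \<V>"
    then obtain V where V: "V \<in> \<V>" "S = W V" by blast
    have "openin X V" using V(1) unfolding \<V>_def by blast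
    then show "openin K S" using phopen[of V] Vsub[OF V(1)] V(2) unfolding W_def by simp
  qed
  then obtain F where F: "finite F" "F \<subseteq> W ` \<V>" "topspace K \<subseteq> \<Union>F"
    using assms(2) cov unfolding compact_space_alt by meson
  then obtain G where G: "G \<subseteq> \<V>" "finite G" "F = W ` G"
    by (meson finite_subset_image)
  define V where "V = \<Union>G"
  have Vo: "openin X V" using G unfolding V_def \<V>_def by auto
  have VU: "V \<subseteq> U" using G Vsub unfolding V_def by auto
  have clV: "X closure_of V \<subseteq> U"
    using G unfolding V_def \<V>_def by (auto simp: closure_of_Union)
  have meet: "\<phi> z \<inter> V \<noteq> {}" if zK: "z \<in> topspace K" for z
  proof -
    obtain S where S: "S \<in> F" "z \<in> S" using F(3) zK by blast
    then obtain V' where "V' \<in> G" "S = W V'" using G(3) by blast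
    then have "\<phi> z \<inter> V' \<noteq> {}" "V' \<subseteq> V" using S unfolding W_def V_def by auto
    then show ?thesis by blast
  qed
  define \<psi> where "\<psi> = (\<lambda>z. X closure_of (\<phi> z \<inter> V))"
  have lsc: "lsc_map K X \<psi>"
    unfolding lsc_map_def
  proof (intro conjI ballI allI impI)
    fix y assume y: "y \<in> topspace K"
    show "\<psi> y \<subseteq> topspace X" unfolding \<psi>_def by (rule closure_of_subset_topspace)
    have "\<phi> y \<inter> V \<subseteq> \<psi> y" unfolding \<psi>_def
      using ph[OF y] UX by (intro closure_of_subset) auto
    then show "\<psi> y \<noteq> {}" using meet[OF y] by blast
  next
    fix H assume H: "openin X H"
    have "{y \<in> topspace K. \<psi> y \<inter> H \<noteq> {}} = {y \<in> topspace K. \<phi> y \<inter> (V \<inter> H) \<noteq> {}}"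
      unfolding \<psi>_def using openin_Int_closure_of_eq_empty[OF H]
      by (auto simp: Int_commute Int_left_commute Int_assoc)
    moreover have "openin K {y \<in> topspace K. \<phi> y \<inter> (V \<inter> H) \<noteq> {}}"
      using phopen Vo H VU by auto
    ultimately show "openin K {y \<in> topspace K. \<psi> y \<inter> H \<noteq> {}}" by simp
  qed
  have "\<forall>y\<in>topspace K. closedin X (\<psi> y)" unfolding \<psi>_def by auto
  then obtain g where g: "continuous_map K X g" "\<forall>y\<in>topspace K. g y \<in> \<psi> y"
    using assms(6) lsc unfolding selective_def by blast
  have gy: "g y \<in> \<phi> y" if y: "y \<in> topspace K" for y
  proof -
    have "g y \<in> X closure_of (\<phi> y \<inter> V)" using g y \<psi>_def by auto
    then have "g y \<in> X closure_of (\<phi> y) \<and> g y \<in> U"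
      using closure_of_mono[of "\<phi> y \<inter> V" "\<phi> y" X] closure_of_mono[of "\<phi> y \<inter> V" V X] clV
      by auto
    then have "g y \<in> subtopology X U closure_of (\<phi> y)"
      using ph[OF y] by (simp add: closure_of_subtopology Int_absorb1)
    moreover have "subtopology X U closure_of (\<phi> y) = \<phi> y"
    proof -
      have "closedin (subtopology X U) (\<phi> y)" using A y by simp
      then show ?thesis by (simp add: closure_of_closedin)
    qed
    ultimately show ?thesis by simp
  qed
  have "continuous_map K (subtopology X U) g"
    using g gy ph by (intro continuous_map_into_subtopology) auto
  then show "\<exists>f. continuous_map K (subtopology X U) f \<and> (\<forall>y\<in>topspace K. f y \<in> \<phi> y)"
    using gy by blast
qed

end
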